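(* Let $M$ and $M'$ be two stable matchings in an instance $I$ of SPA-S. If some student $s_i$ is assigned in $M$ and in $M'$ to different projects offered by the same lecturer $l_k$, and $s_i$ prefers $M$ to $M'$, then $l_k$ prefers $s_i$ to some student $s_z\in M(l_k)\setminus M'(l_k)$.
   Context: An instance $I$ of SPA-S consists of a finite set $\mathcal{S}$ of students, a finite set $\mathcal{P}$ of projects and a finite set $\mathcal{L}$ of lecturers. Each student $s_i$ ranks a subset $A_i\subseteq\mathcal{P}$ (its acceptable projects) in strict order. Each project is offered by exactly one lecturer; lecturer $l_k$ offers a nonempty set $P_k\subseteq\mathcal{P}$, the $P_k$ partitioning $\mathcal{P}$. Each lecturer $l_k$ ranks in strict order the students who find at least one project of $P_k$ acceptable. Projects have capacities $c_j\in\mathbb{Z}^+$, lecturers have capacities $d_k\in\mathbb{Z}^+$ with $\max\{c_j:p_j\in P_k\}\le d_k\le\sum\{c_j:p_j\in P_k\}$. A pair $(s_i,p_j)$, $p_j$ offered by $l_k$, is acceptable if $p_j\in A_i$ and $s_i$ is on $l_k$'s list. A matching $M$ is a set of acceptable pairs with each student in at most one pair, $|M(p_j)|\le c_j$, $|M(l_k)|\le d_k$, where $M(s_i)$, $M(p_j)$, $M(l_k)$ denote the project of $s_i$, the students assigned to $p_j$, and the students assigned to projects of $l_k$. Undersubscribed/full means fewer than/exactly capacity many assigned students. An acceptable pair $(s_i,p_j)\notin M$ ($p_j$ offered by $l_k$) blocks $M$ if ($s_i$ is unassigned or prefers $p_j$ to $M(s_i)$) and one of: (P1) $p_j$ and $l_k$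 undersubscribed; (P2) $p_j$ undersubscribed, $l_k$ full, $s_i\in M(l_k)$; (P3) $p_j$ undersubscribed, $l_k$ full, $l_k$ prefers $s_i$ to the worst student of $M(l_k)$; (P4) $p_j$ full and $l_k$ prefers $s_i$ to the worst student of $M(p_j)$. $M$ is stable if it has no blocking pair. A student $s$ prefers $M$ to $M'$ if $s$ is assigned in both and prefers $M(s)$ to $M'(s)$. *)

theory Defs
  imports Main
begin

text \<open>Parameters:
  S (students), P (projects), L (lecturers),
  A s (acceptable projects of student s),
  SP s (strict preference of s over projects: (p,q) \<in> SP s means s prefers p to q),
  lec p (the lecturer offering p),
  LP l (strict preference of lecturer l over students: (x,y) \<in> LP l means l prefers x to y),
  cp p (project capacity), dl l (lecturer capacity).\<close>

definition offers :: "'p set \<Rightarrow> ('p \<Rightarrow> 'l) \<Rightarrow> 'l \<Rightarrow> 'p set" where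
  "offers P lec l = {p \<in> P. lec p = l}"

definition lec_list :: "'s set \<Rightarrow> ('s \<Rightarrow> 'p set) \<Rightarrow> ('p \<Rightarrow> 'l) \<Rightarrow> 'l \<Rightarrow> 's set" where
  "lec_list S A lec l = {s \<in> S. \<exists>p \<in> A s. lec p = l}"

definition spa_instance ::
  "'s set \<Rightarrow> 'p set \<Rightarrow> 'l set \<Rightarrow> ('s \<Rightarrow> 'p set) \<Rightarrow> ('s \<Rightarrow> ('p \<times> 'p) set)
   \<Rightarrow> ('p \<Rightarrow> 'l) \<Rightarrow> ('l \<Rightarrow> ('s \<times> 's) set) \<Rightarrow> ('p \<Rightarrow> nat) \<Rightarrow> ('l \<Rightarrow> nat) \<Rightarrow> bool" where
  "spa_instance S P L A SP lec LP cp dl \<longleftrightarrow>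
     finite S \<and> finite P \<and> finite L \<and>
     (\<forall>s \<in> S. A s \<subseteq> P \<and> SP s \<subseteq> A s \<times> A s \<and> strict_linear_order_on (A s) (SP s)) \<and>
     (\<forall>p \<in> P. lec p \<in> L) \<and>
     (\<forall>l \<in> L. offers P lec l \<noteq> {}) \<and>
     (\<forall>l \<in> L. LP l \<subseteq> lec_list S A lec l \<times> lec_list S A lec l \<and>
              strict_linear_order_on (lec_list S A lec l) (LP l)) \<and>
     (\<forall>p \<in> P. cp p > 0) \<and>
     (\<forall>l \<in> L. dl l > 0 \<and> Max (cp ` offers P lec l) \<le> dl l \<and>
              dl l \<le> (\<Sum>p \<in> offers P lec l. cp p))"

definition acceptable_pair :: "'s set \<Rightarrow> ('s \<Rightarrow> 'p set) \<Rightarrow> ('p \<Rightarrow> 'l) \<Rightarrow> 's \<Rightarrow> 'p \<Rightarrow> bool" where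
  "acceptable_pair S A lec s p \<longleftrightarrow> s \<in> S \<and> p \<in> A s \<and> s \<in> lec_list S A lec (lec p)"

definition Mproj :: "('s \<times> 'p) set \<Rightarrow> 'p \<Rightarrow> 's set" where
  "Mproj M p = {s. (s, p) \<in> M}"

definition Mlec :: "('s \<times> 'p) set \<Rightarrow> ('p \<Rightarrow> 'l) \<Rightarrow> 'l \<Rightarrow> 's set" where
  "Mlec M lec l = {s. \<exists>p. (s, p) \<in> M \<and> lec p = l}"

definition assigned :: "('s \<times> 'p) set \<Rightarrow> 's \<Rightarrow> bool" where
  "assigned M s \<longleftrightarrow> (\<exists>p. (s, p) \<in> M)"

definition is_matching ::
  "'s set \<Rightarrow> ('s \<Rightarrow> 'p set) \<Rightarrow> ('p \<Rightarrow> 'l) \<Rightarrow> ('p \<Rightarrow> nat) \<Rightarrow> ('l \<Rightarrow> nat)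
   \<Rightarrow> ('s \<times> 'p) set \<Rightarrow> bool" where
  "is_matching S A lec cp dl M \<longleftrightarrow>
     (\<forall>(s, p) \<in> M. acceptable_pair S A lec s p) \<and>
     (\<forall>s p q. (s, p) \<in> M \<longrightarrow> (s, q) \<in> M \<longrightarrow> p = q) \<and>
     (\<forall>p. card (Mproj M p) \<le> cp p) \<and>
     (\<forall>l. card (Mlec M lec l) \<le> dl l)"

definition prefers_to_worst :: "('s \<times> 's) set \<Rightarrow> 's \<Rightarrow> 's set \<Rightarrow> bool" where
  "prefers_to_worst R x T \<longleftrightarrow>
     (\<exists>w \<in> T. (\<forall>y \<in> T. y \<noteq> w \<longrightarrow> (y, w) \<in> R) \<and> (x, w) \<in> R)"

definition blocking_pair ::
  "'s set \<Rightarrow> ('s \<Rightarrow> 'p set) \<Rightarrow> ('s \<Rightarrow> ('p \<times> 'p) set) \<Rightarrow> ('p \<Rightarrow> 'l)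
   \<Rightarrow> ('l \<Rightarrow> ('s \<times> 's) set) \<Rightarrow> ('p \<Rightarrow> nat) \<Rightarrow> ('l \<Rightarrow> nat)
   \<Rightarrow> ('s \<times> 'p) set \<Rightarrow> 's \<Rightarrow> 'p \<Rightarrow> bool" where
  "blocking_pair S A SP lec LP cp dl M s p \<longleftrightarrow>
     acceptable_pair S A lec s p \<and> (s, p) \<notin> M \<and>
     (\<not> assigned M s \<or> (\<exists>q. (s, q) \<in> M \<and> (p, q) \<in> SP s)) \<and>
     (  (card (Mproj M p) < cp p \<and> card (Mlec M lec (lec p)) < dl (lec p))
      \<or> (card (Mproj M p) < cp p \<and> card (Mlec M lec (lec p)) = dl (lec p)
           \<and> s \<in> Mlec M lec (lec p))
      \<or> (card (Mproj M p) < cp p \<and> card (Mlec M lec (lec p)) = dl (lec p)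
           \<and> prefers_to_worst (LP (lec p)) s (Mlec M lec (lec p)))
      \<or> (card (Mproj M p) = cp p \<and> prefers_to_worst (LP (lec p)) s (Mproj M p)))"

definition spa_stable ::
  "'s set \<Rightarrow> ('s \<Rightarrow> 'p set) \<Rightarrow> ('s \<Rightarrow> ('p \<times> 'p) set) \<Rightarrow> ('p \<Rightarrow> 'l)
   \<Rightarrow> ('l \<Rightarrow> ('s \<times> 's) set) \<Rightarrow> ('p \<Rightarrow> nat) \<Rightarrow> ('l \<Rightarrow> nat)
   \<Rightarrow> ('s \<times> 'p) set \<Rightarrow> bool" where
  "spa_stable S A SP lec LP cp dl M \<longleftrightarrow>
     is_matching S A lec cp dl M \<and>
     (\<forall>s p. \<not> blocking_pair S A SP lec LP cp dl M s p)"

definition student_prefers :: "('s \<Rightarrow> ('p \<times> 'p) set) \<Rightarrow> 's \<Rightarrow> ('s \<times> 'p) set \<Rightarrow> ('s \<times> 'p) set \<Rightarrow> bool" where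
  "student_prefers SP s M M' \<longleftrightarrow> (\<exists>p q. (s, p) \<in> M \<and> (s, q) \<in> M' \<and> (p, q) \<in> SP s)"

end

theory Submission
  imports Defs
begin

lemma worst_exists:
  assumes "strict_linear_order_on C R" "finite T" "T \<noteq> {}" "T \<subseteq> C"
  shows "\<exists>w\<in>T. \<forall>y\<in>T. y \<noteq> w \<longrightarrow> (y, w) \<in> R"
  using assms(2,3,4)
proof (induction T rule: finite_ne_induct)
  case (singleton x)
  then show ?case by auto
next
  case (insert a F)
  then obtain w where w: "w \<in> F" "\<forall>y\<in>F. y \<noteq> w \<longrightarrow> (y, w) \<in> R" by auto
  have tr: "trans R" and tot: "total_on C R" using assms(1) by (auto simp: strict_linear_order_on_def)
  have aw: "a \<noteq> w" using insert w by auto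
  have "a \<in> C" "w \<in> C" using insert w by auto
  then have "(a, w) \<in> R \<or> (w, a) \<in> R" using tot aw by (auto simp: total_on_def)
  then show ?case
  proof
    assume "(a, w) \<in> R" then show ?case using w by auto
  next
    assume wa: "(w, a) \<in> R"
    have "\<forall>y\<in>insert a F. y \<noteq> a \<longrightarrow> (y, a) \<in> R"
      using w wa tr by (metis insertE transD)
    then show ?case by auto
  qed
qed

lemma not_ptw:
  assumes "strict_linear_order_on C R" "finite T" "T \<noteq> {}" "T \<subseteq> C" "x \<in> C" "x \<notin> T"
    "\<not> prefers_to_worst R x T" "y \<in> T"
  shows "(y, x) \<in> R"
proof -
  obtain w where w: "w \<in> T" "\<forall>y\<in>T. y \<noteq> w \<longrightarrow> (y, w) \<in> R"
    using worst_exists[OF assms(1-4)] by auto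
  have tr: "trans R" and tot: "total_on C R" using assms(1) by (auto simp: strict_linear_order_on_def)
  have "(x, w) \<notin> R" using assms(7) w unfolding prefers_to_worst_def by auto
  moreover have "x \<noteq> w" "w \<in> C" using w assms by auto
  ultimately have "(w, x) \<in> R" using tot assms(5) by (auto simp: total_on_def)
  then show ?thesis using w assms(8) tr by (metis transD)
qed

lemma ptw_intro:
  assumes "strict_linear_order_on C R" "finite T" "T \<subseteq> C" "x \<in> T" "(y, x) \<in> R"
  shows "prefers_to_worst R y T"
proof -
  obtain w where w: "w \<in> T" "\<forall>y\<in>T. y \<noteq> w \<longrightarrow> (y, w) \<in> R"
    using worst_exists[OF assms(1,2) _ assms(3)] assms(4) by auto
  have tr: "trans R" using assms(1) by (auto simp: strict_linear_order_on_def)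
  have "(y, w) \<in> R" using w assms(4,5) tr by (metis transD)
  then show ?thesis using w unfolding prefers_to_worst_def by auto
qed


definition better :: "('s \<Rightarrow> ('p \<times> 'p) set) \<Rightarrow> ('s \<times> 'p) set \<Rightarrow> ('s \<times> 'p) set \<Rightarrow> 's \<Rightarrow> bool" where
  "better SP M M' x \<longleftrightarrow> assigned M x \<and> (\<not> assigned M' x \<or> student_prefers SP x M M')"

definition Inn :: "('s \<Rightarrow> ('p \<times> 'p) set) \<Rightarrow> ('s \<times> 'p) set \<Rightarrow> ('s \<times> 'p) set \<Rightarrow> 'p \<Rightarrow> 's set" where
  "Inn SP M M' q = {x \<in> Mproj M q - Mproj M' q. better SP M M' x}"

definition Outt :: "('s \<Rightarrow> ('p \<times> 'p) set) \<Rightarrow> ('s \<times> 'p) set \<Rightarrow> ('s \<times> 'p) set \<Rightarrow> 'p \<Rightarrow> 's set" where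
  "Outt SP M M' q = {y \<in> Mproj M' q - Mproj M q. student_prefers SP y M M'}"

definition alpha :: "('s \<Rightarrow> ('p \<times> 'p) set) \<Rightarrow> ('s \<times> 'p) set \<Rightarrow> ('s \<times> 'p) set \<Rightarrow> 'p \<Rightarrow> int" where
  "alpha SP M M' q = int (card (Inn SP M M' q)) - int (card (Outt SP M M' q))"

context
  fixes S P L A SP lec LP cp dl
  assumes inst: "spa_instance S P L A SP lec LP cp dl"
begin

lemma finS: "finite S" using inst by (simp add: spa_instance_def)
lemma finP: "finite P" using inst by (simp add: spa_instance_def)
lemma finL: "finite L" using inst by (simp add: spa_instance_def)

lemma SPord: "s \<in> S \<Longrightarrow> strict_linear_order_on (A s) (SP s)"
  using inst by (simp add: spa_instance_def)
lemma AP: "s \<in> S \<Longrightarrow> A s \<subseteq> P"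
  using inst by (simp add: spa_instance_def)
lemma lecL: "p \<in> P \<Longrightarrow> lec p \<in> L"
  using inst by (simp add: spa_instance_def)
lemma LPord: "k \<in> L \<Longrightarrow> strict_linear_order_on (lec_list S A lec k) (LP k)"
  using inst by (simp add: spa_instance_def)
lemma cppos: "p \<in> P \<Longrightarrow> cp p > 0"
  using inst by (simp add: spa_instance_def)
lemma dlpos: "k \<in> L \<Longrightarrow> dl k > 0"
  using inst by (simp add: spa_instance_def)

lemma mfacts:
  assumes "is_matching S A lec cp dl M" "(s, p) \<in> M"
  shows "s \<in> S" "p \<in> A s" "p \<in> P" "s \<in> lec_list S A lec (lec p)" "lec p \<in> L"
proof -
  have "acceptable_pair S A lec s p" using assms unfolding is_matching_def by auto
  then show "s \<in> S" "p \<in> A s" "s \<in> lec_list S A lec (lec p)" unfolding acceptable_pair_def by auto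
  then show "p \<in> P" using AP by auto
  then show "lec p \<in> L" using lecL by auto
qed

lemma muniq: "is_matching S A lec cp dl M \<Longrightarrow> (s, p) \<in> M \<Longrightarrow> (s, q) \<in> M \<Longrightarrow> p = q"
  unfolding is_matching_def by blast

lemma Mproj_sub: "is_matching S A lec cp dl M \<Longrightarrow> Mproj M q \<subseteq> S"
  using mfacts unfolding Mproj_def by auto
lemma Mproj_fin: "is_matching S A lec cp dl M \<Longrightarrow> finite (Mproj M q)"
  using Mproj_sub finS finite_subset by metis
lemma Mlec_sub: "is_matching S A lec cp dl M \<Longrightarrow> Mlec M lec k \<subseteq> S"
  using mfacts unfolding Mlec_def by auto
lemma Mlec_fin: "is_matching S A lec cp dl M \<Longrightarrow> finite (Mlec M lec k)"
  using Mlec_sub finS finite_subset by metis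
lemma Mproj_list: "is_matching S A lec cp dl M \<Longrightarrow> Mproj M q \<subseteq> lec_list S A lec (lec q)"
  using mfacts unfolding Mproj_def by auto
lemma Mlec_list: "is_matching S A lec cp dl M \<Longrightarrow> Mlec M lec k \<subseteq> lec_list S A lec k"
  using mfacts unfolding Mlec_def by fastforce
lemma Mproj_card: "is_matching S A lec cp dl M \<Longrightarrow> card (Mproj M q) \<le> cp q"
  unfolding is_matching_def by auto
lemma Mlec_card: "is_matching S A lec cp dl M \<Longrightarrow> card (Mlec M lec k) \<le> dl k"
  unfolding is_matching_def by auto


lemma better_pref:
  assumes M: "is_matching S A lec cp dl M" and b: "better SP M M' x" and xq: "(x, q) \<in> M"
  shows "\<not> assigned M' x \<or> (\<exists>q'. (x, q') \<in> M' \<and> (q, q') \<in> SP x)"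
  using b muniq[OF M _ xq] unfolding better_def student_prefers_def by metis

lemma notblock:
  assumes M: "is_matching S A lec cp dl M" and M': "spa_stable S A SP lec LP cp dl M'"
    and x: "x \<in> Inn SP M M' q"
  shows "(card (Mproj M' q) = cp q \<and> (\<forall>y\<in>Mproj M' q. (y, x) \<in> LP (lec q))) \<or>
         (card (Mlec M' lec (lec q)) = dl (lec q) \<and> x \<notin> Mlec M' lec (lec q) \<and>
          (\<forall>y\<in>Mlec M' lec (lec q). (y, x) \<in> LP (lec q)))"
proof -
  have xq: "(x, q) \<in> M" "(x, q) \<notin> M'" "better SP M M' x" using x by (auto simp: Inn_def Mproj_def)
  have M'm: "is_matching S A lec cp dl M'" using M' by (simp add: spa_stable_def)
  have acc: "acceptable_pair S A lec x q" using M xq unfolding is_matching_def by auto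
  have pref: "\<not> assigned M' x \<or> (\<exists>q'. (x, q') \<in> M' \<and> (q, q') \<in> SP x)"
    using better_pref[OF M xq(3) xq(1)] .
  have nb: "\<not> blocking_pair S A SP lec LP cp dl M' x q" using M' by (simp add: spa_stable_def)
  then have nb2: "\<not> ((card (Mproj M' q) < cp q \<and> card (Mlec M' lec (lec q)) < dl (lec q))
      \<or> (card (Mproj M' q) < cp q \<and> card (Mlec M' lec (lec q)) = dl (lec q)
           \<and> x \<in> Mlec M' lec (lec q))
      \<or> (card (Mproj M' q) < cp q \<and> card (Mlec M' lec (lec q)) = dl (lec q)
           \<and> prefers_to_worst (LP (lec q)) x (Mlec M' lec (lec q)))
      \<or> (card (Mproj M' q) = cp q \<and> prefers_to_worst (LP (lec q)) x (Mproj M' q)))"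
    using acc xq(2) pref unfolding blocking_pair_def by blast
  have qP: "q \<in> P" and kL: "lec q \<in> L" and xl: "x \<in> lec_list S A lec (lec q)"
    using mfacts[OF M xq(1)] by auto
  have ord: "strict_linear_order_on (lec_list S A lec (lec q)) (LP (lec q))" using LPord kL .
  show ?thesis
  proof (cases "card (Mproj M' q) = cp q")
    case True
    then have np: "\<not> prefers_to_worst (LP (lec q)) x (Mproj M' q)" using nb2 by blast
    have ne: "Mproj M' q \<noteq> {}" using True cppos[OF qP] by auto
    have "x \<notin> Mproj M' q" using xq(2) by (simp add: Mproj_def)
    then have "\<forall>y\<in>Mproj M' q. (y, x) \<in> LP (lec q)"
      using not_ptw[OF ord Mproj_fin[OF M'm] ne Mproj_list[OF M'm] xl _ np] by blast
    then show ?thesis using True by blast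
  next
    case False
    then have lt: "card (Mproj M' q) < cp q" using Mproj_card[OF M'm, of q] by linarith
    then have eq: "card (Mlec M' lec (lec q)) = dl (lec q)"
      using nb2 Mlec_card[OF M'm, of "lec q"] by linarith
    then have nin: "x \<notin> Mlec M' lec (lec q)" and np: "\<not> prefers_to_worst (LP (lec q)) x (Mlec M' lec (lec q))"
      using nb2 lt by blast+
    have ne: "Mlec M' lec (lec q) \<noteq> {}" using eq dlpos[OF kL] by auto
    have "\<forall>y\<in>Mlec M' lec (lec q). (y, x) \<in> LP (lec q)"
      using not_ptw[OF ord Mlec_fin[OF M'm] ne Mlec_list[OF M'm] xl nin np] by blast
    then show ?thesis using eq nin by blast
  qed
qed

lemma typeA:
  assumes M: "spa_stable S A SP lec LP cp dl M" and M': "is_matching S A lec cp dl M'"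
    and x: "x \<in> Inn SP M M' q" and full: "card (Mproj M' q) = cp q"
    and all: "\<forall>y\<in>Mproj M' q. (y, x) \<in> LP (lec q)"
  shows "card (Inn SP M M' q) \<le> card (Outt SP M M' q)"
proof -
  have Mm: "is_matching S A lec cp dl M" using M by (simp add: spa_stable_def)
  have xq: "(x, q) \<in> M" using x by (auto simp: Inn_def Mproj_def)
  have kL: "lec q \<in> L" using mfacts[OF Mm xq] by auto
  have ord: "strict_linear_order_on (lec_list S A lec (lec q)) (LP (lec q))" using LPord kL .
  have sub: "Mproj M' q - Mproj M q \<subseteq> Outt SP M M' q"
  proof
    fix y assume y: "y \<in> Mproj M' q - Mproj M q"
    have yq: "(y, q) \<in> M'" "(y, q) \<notin> M" using y by (auto simp: Mproj_def)
    have yx: "(y, x) \<in> LP (lec q)" using all y by auto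
    have acc: "acceptable_pair S A lec y q" using M' yq unfolding is_matching_def by auto
    have yS: "y \<in> S" and qA: "q \<in> A y" using mfacts[OF M' yq(1)] by auto
    show "y \<in> Outt SP M M' q"
    proof (rule ccontr)
      assume "y \<notin> Outt SP M M' q"
      then have nsp: "\<not> student_prefers SP y M M'" using y by (simp add: Outt_def)
      have c3: "\<not> assigned M y \<or> (\<exists>r. (y, r) \<in> M \<and> (q, r) \<in> SP y)"
      proof (cases "assigned M y")
        case True
        then obtain r where r: "(y, r) \<in> M" by (auto simp: assigned_def)
        have "r \<noteq> q" using r yq by auto
        moreover have "r \<in> A y" using mfacts[OF Mm r] by auto
        moreover have "(r, q) \<notin> SP y" using nsp r yq(1) by (auto simp: student_prefers_def)
        ultimately have "(q, r) \<in> SP y" using SPord[OF yS] qA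
          by (auto simp: strict_linear_order_on_def total_on_def)
        then show ?thesis using r by auto
      qed auto
      have xinq: "x \<in> Mproj M q" using xq by (simp add: Mproj_def)
      have xink: "x \<in> Mlec M lec (lec q)" using xq by (auto simp: Mlec_def)
      have "blocking_pair S A SP lec LP cp dl M y q"
      proof (cases "card (Mproj M q) = cp q")
        case True
        have "prefers_to_worst (LP (lec q)) y (Mproj M q)"
          using ptw_intro[OF ord Mproj_fin[OF Mm] Mproj_list[OF Mm] xinq yx] .
        then show ?thesis using True acc yq c3 unfolding blocking_pair_def by blast
      next
        case False
        then have lt: "card (Mproj M q) < cp q" using Mproj_card[OF Mm, of q] by linarith
        have "prefers_to_worst (LP (lec q)) y (Mlec M lec (lec q))"
          using ptw_intro[OF ord Mlec_fin[OF Mm] Mlec_list[OF Mm] xink yx] .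
        moreover have "card (Mlec M lec (lec q)) < dl (lec q) \<or> card (Mlec M lec (lec q)) = dl (lec q)"
          using Mlec_card[OF Mm, of "lec q"] by linarith
        ultimately show ?thesis using lt acc yq c3 unfolding blocking_pair_def by blast
      qed
      then show False using M by (simp add: spa_stable_def)
    qed
  qed
  have f1: "finite (Mproj M q)" "finite (Mproj M' q)" using Mproj_fin Mm M' by auto
  have finO: "finite (Outt SP M M' q)" using f1 by (simp add: Outt_def)
  have "card (Inn SP M M' q) \<le> card (Mproj M q - Mproj M' q)"
    using f1 by (intro card_mono) (auto simp: Inn_def)
  also have "\<dots> = card (Mproj M q) - card (Mproj M q \<inter> Mproj M' q)"
    using f1 by (simp add: card_Diff_subset_Int)
  also have "\<dots> \<le> card (Mproj M' q) - card (Mproj M' q \<inter> Mproj M q)"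
    using Mproj_card[OF Mm, of q] full by (simp add: Int_commute)
  also have "\<dots> = card (Mproj M' q - Mproj M q)"
    using f1 by (simp add: card_Diff_subset_Int)
  also have "\<dots> \<le> card (Outt SP M M' q)" using card_mono[OF finO sub] .
  finally show ?thesis .
qed


lemma alpha_pos:
  assumes M: "spa_stable S A SP lec LP cp dl M" and M': "spa_stable S A SP lec LP cp dl M'"
    and pos: "alpha SP M M' q > 0"
  shows "\<exists>x\<in>Inn SP M M' q. card (Mlec M' lec (lec q)) = dl (lec q) \<and> x \<notin> Mlec M' lec (lec q) \<and>
          (\<forall>y\<in>Mlec M' lec (lec q). (y, x) \<in> LP (lec q))"
proof -
  have Mm: "is_matching S A lec cp dl M" using M by (simp add: spa_stable_def)
  have M'm: "is_matching S A lec cp dl M'" using M' by (simp add: spa_stable_def)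
  have lt: "card (Outt SP M M' q) < card (Inn SP M M' q)" using pos by (simp add: alpha_def)
  then obtain x where x: "x \<in> Inn SP M M' q" by fastforce
  have "\<not> (card (Mproj M' q) = cp q \<and> (\<forall>y\<in>Mproj M' q. (y, x) \<in> LP (lec q)))"
    using typeA[OF M M'm x] lt by fastforce
  then show ?thesis using notblock[OF Mm M' x] x by blast
qed

lemma decomp:
  assumes Mm: "is_matching S A lec cp dl M" and M'm: "is_matching S A lec cp dl M'"
  shows "int (card (Mproj M q)) - int (card (Mproj M' q)) = alpha SP M M' q - alpha SP M' M q"
proof -
  have part: "\<And>M M'. is_matching S A lec cp dl M \<Longrightarrow> is_matching S A lec cp dl M' \<Longrightarrow>
     Mproj M q - Mproj M' q = Inn SP M M' q \<union> Outt SP M' M q \<and> Inn SP M M' q \<inter> Outt SP M' M q = {}"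
  proof -
    fix M M' assume Mm: "is_matching S A lec cp dl M" and M'm: "is_matching S A lec cp dl M'"
    have "Mproj M q - Mproj M' q \<subseteq> Inn SP M M' q \<union> Outt SP M' M q"
    proof
      fix x assume x: "x \<in> Mproj M q - Mproj M' q"
      have xq: "(x, q) \<in> M" "(x, q) \<notin> M'" using x by (auto simp: Mproj_def)
      have xS: "x \<in> S" and qA: "q \<in> A x" using mfacts[OF Mm xq(1)] by auto
      show "x \<in> Inn SP M M' q \<union> Outt SP M' M q"
      proof (cases "assigned M' x")
        case False
        then show ?thesis using x xq by (auto simp: Inn_def better_def assigned_def)
      next
        case True
        then obtain r where r: "(x, r) \<in> M'" by (auto simp: assigned_def)
        have "r \<noteq> q" using r xq by auto
        moreover have "r \<in> A x" using mfacts[OF M'm r] by auto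
        ultimately have "(q, r) \<in> SP x \<or> (r, q) \<in> SP x" using SPord[OF xS] qA
          by (auto simp: strict_linear_order_on_def total_on_def)
        then show ?thesis using x xq r
          by (auto simp: Inn_def Outt_def better_def assigned_def student_prefers_def)
      qed
    qed
    moreover have "Inn SP M M' q \<union> Outt SP M' M q \<subseteq> Mproj M q - Mproj M' q"
      by (auto simp: Inn_def Outt_def)
    moreover have "Inn SP M M' q \<inter> Outt SP M' M q = {}"
    proof (rule ccontr)
      assume "Inn SP M M' q \<inter> Outt SP M' M q \<noteq> {}"
      then obtain x where x: "x \<in> Inn SP M M' q" "x \<in> Outt SP M' M q" by blast
      then have b: "better SP M M' x" and sp: "student_prefers SP x M' M"
        by (auto simp: Inn_def Outt_def)
      then obtain a b where ab: "(x, a) \<in> M'" "(x, b) \<in> M" "(a, b) \<in> SP x"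
        by (auto simp: student_prefers_def)
      have "student_prefers SP x M M'" using b ab by (auto simp: better_def assigned_def)
      then obtain c d where cd: "(x, c) \<in> M" "(x, d) \<in> M'" "(c, d) \<in> SP x"
        by (auto simp: student_prefers_def)
      have "c = b" "d = a" using cd ab muniq Mm M'm by metis+
      have xS: "x \<in> S" using mfacts[OF Mm ab(2)] by auto
      have "trans (SP x)" "irrefl (SP x)" using SPord[OF xS] by (auto simp: strict_linear_order_on_def)
      then show False using ab cd \<open>c = b\<close> \<open>d = a\<close> by (metis irrefl_def transD)
    qed
    ultimately show "Mproj M q - Mproj M' q = Inn SP M M' q \<union> Outt SP M' M q \<and> Inn SP M M' q \<inter> Outt SP M' M q = {}"
      by blast
  qed
  note p1 = part[OF Mm M'm] and p2 = part[OF M'm Mm]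
  have f: "finite (Mproj M q)" "finite (Mproj M' q)" using Mproj_fin Mm M'm by auto
  have fI: "finite (Inn SP M M' q)" "finite (Inn SP M' M q)" using f by (auto simp: Inn_def)
  have fO: "finite (Outt SP M M' q)" "finite (Outt SP M' M q)" using f by (auto simp: Outt_def)
  have c1: "card (Mproj M q) = card (Mproj M q \<inter> Mproj M' q) + card (Mproj M q - Mproj M' q)"
    using f by (metis card_Un_disjoint Int_Diff_Un Int_Diff_disjoint finite_Diff finite_Int)
  have c2: "card (Mproj M' q) = card (Mproj M q \<inter> Mproj M' q) + card (Mproj M' q - Mproj M q)"
    using f by (metis Int_commute card_Un_disjoint Int_Diff_Un Int_Diff_disjoint finite_Diff finite_Int)
  have c3: "card (Mproj M q - Mproj M' q) = card (Inn SP M M' q) + card (Outt SP M' M q)"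
    using p1 fI fO by (simp add: card_Un_disjoint)
  have c4: "card (Mproj M' q - Mproj M q) = card (Inn SP M' M q) + card (Outt SP M M' q)"
    using p2 fI fO by (simp add: card_Un_disjoint)
  show ?thesis using c1 c2 c3 c4 by (simp add: alpha_def)
qed


lemma Mlec_card_sum:
  assumes Mm: "is_matching S A lec cp dl M"
  shows "card (Mlec M lec k) = (\<Sum>q\<in>offers P lec k. card (Mproj M q))"
proof -
  have eq: "Mlec M lec k = (\<Union>q\<in>offers P lec k. Mproj M q)"
    using mfacts(3)[OF Mm] by (auto simp: Mlec_def Mproj_def offers_def)
  have fo: "finite (offers P lec k)" using finP by (simp add: offers_def)
  have "card (\<Union>q\<in>offers P lec k. Mproj M q) = (\<Sum>q\<in>offers P lec k. card (Mproj M q))"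
    by (rule card_UN_disjoint[OF fo]) (use Mproj_fin[OF Mm] muniq[OF Mm] in \<open>auto simp: Mproj_def\<close>)
  then show ?thesis using eq by simp
qed

lemma lecturer_sum:
  assumes M: "spa_stable S A SP lec LP cp dl M" and M': "spa_stable S A SP lec LP cp dl M'"
    and kL: "k \<in> L"
  shows "(\<Sum>q\<in>offers P lec k. alpha SP M M' q) \<le> 0"
proof (cases "\<forall>q\<in>offers P lec k. alpha SP M M' q \<le> 0")
  case True
  then show ?thesis by (simp add: sum_nonpos)
next
  case False
  have Mm: "is_matching S A lec cp dl M" using M by (simp add: spa_stable_def)
  have M'm: "is_matching S A lec cp dl M'" using M' by (simp add: spa_stable_def)
  have ord: "strict_linear_order_on (lec_list S A lec k) (LP k)" using LPord kL .
  then have tr: "trans (LP k)" and ir: "irrefl (LP k)" by (auto simp: strict_linear_order_on_def)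
  from False obtain q0 where q0: "q0 \<in> offers P lec k" "alpha SP M M' q0 > 0" by force
  have lq0: "lec q0 = k" using q0 by (simp add: offers_def)
  obtain x where x: "x \<in> Inn SP M M' q0" "card (Mlec M' lec k) = dl k" "x \<notin> Mlec M' lec k"
     "\<forall>y\<in>Mlec M' lec k. (y, x) \<in> LP k"
    using alpha_pos[OF M M' q0(2)] lq0 by auto
  have xMk: "x \<in> Mlec M lec k" using x(1) lq0 by (auto simp: Inn_def Mproj_def Mlec_def)
  have neg: "\<forall>r\<in>offers P lec k. alpha SP M' M r \<le> 0"
  proof (rule ccontr)
    assume "\<not> (\<forall>r\<in>offers P lec k. alpha SP M' M r \<le> 0)"
    then obtain r where r: "r \<in> offers P lec k" "alpha SP M' M r > 0" by force
    have lr: "lec r = k" using r by (simp add: offers_def)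
    obtain y where y: "y \<in> Inn SP M' M r" "\<forall>z\<in>Mlec M lec k. (z, y) \<in> LP k"
      using alpha_pos[OF M' M r(2)] lr by auto
    have "y \<in> Mlec M' lec k" using y(1) lr by (auto simp: Inn_def Mproj_def Mlec_def)
    then have "(y, x) \<in> LP k" using x(4) by auto
    moreover have "(x, y) \<in> LP k" using y(2) xMk by auto
    ultimately show False using tr ir by (metis irrefl_def transD)
  qed
  have "(\<Sum>q\<in>offers P lec k. alpha SP M M' q) =
        (\<Sum>q\<in>offers P lec k. alpha SP M' M q) +
        (\<Sum>q\<in>offers P lec k. (int (card (Mproj M q)) - int (card (Mproj M' q))))"
    by (simp add: decomp[OF Mm M'm] sum.distrib[symmetric])
  also have "(\<Sum>q\<in>offers P lec k. (int (card (Mproj M q)) - int (card (Mproj M' q)))) =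
     int (card (Mlec M lec k)) - int (card (Mlec M' lec k))"
    by (simp add: sum_subtractf Mlec_card_sum[OF Mm] Mlec_card_sum[OF M'm])
  also have "\<dots> \<le> 0" using x(2) Mlec_card[OF Mm, of k] by simp
  finally show ?thesis using neg by (smt (verit) sum_nonpos)
qed

lemma global_sum:
  assumes Mm: "is_matching S A lec cp dl M" and M'm: "is_matching S A lec cp dl M'"
  shows "(\<Sum>q\<in>P. alpha SP M M' q) \<ge> 0"
proof -
  have fI: "\<And>q. finite (Inn SP M M' q)" using Mproj_fin[OF Mm] by (auto simp: Inn_def)
  have fO: "\<And>q. finite (Outt SP M M' q)" using Mproj_fin[OF M'm] by (auto simp: Outt_def)
  have cI: "card (\<Union>q\<in>P. Inn SP M M' q) = (\<Sum>q\<in>P. card (Inn SP M M' q))"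
    by (rule card_UN_disjoint[OF finP]) (use fI muniq[OF Mm] in \<open>auto simp: Inn_def Mproj_def\<close>)
  have cO: "card (\<Union>q\<in>P. Outt SP M M' q) = (\<Sum>q\<in>P. card (Outt SP M M' q))"
    by (rule card_UN_disjoint[OF finP]) (use fO muniq[OF M'm] in \<open>auto simp: Outt_def Mproj_def\<close>)
  have sub: "(\<Union>q\<in>P. Outt SP M M' q) \<subseteq> (\<Union>q\<in>P. Inn SP M M' q)"
  proof
    fix y assume "y \<in> (\<Union>q\<in>P. Outt SP M M' q)"
    then obtain q where q: "y \<in> Outt SP M M' q" by auto
    then have sp: "student_prefers SP y M M'" and yq: "(y, q) \<in> M'" by (auto simp: Outt_def Mproj_def)
    then obtain a b where ab: "(y, a) \<in> M" "(y, b) \<in> M'" "(a, b) \<in> SP y"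
      by (auto simp: student_prefers_def)
    have yS: "y \<in> S" and aP: "a \<in> P" using mfacts[OF Mm ab(1)] by auto
    have "irrefl (SP y)" using SPord[OF yS] by (auto simp: strict_linear_order_on_def)
    then have "a \<noteq> b" using ab(3) by (auto simp: irrefl_def)
    then have "(y, a) \<notin> M'" using ab(2) muniq[OF M'm] by metis
    then have "y \<in> Inn SP M M' a" using ab sp
      by (auto simp: Inn_def Mproj_def better_def assigned_def)
    then show "y \<in> (\<Union>q\<in>P. Inn SP M M' q)" using aP by auto
  qed
  have fU: "finite (\<Union>q\<in>P. Inn SP M M' q)" using finP fI by auto
  have "(\<Sum>q\<in>P. card (Outt SP M M' q)) \<le> (\<Sum>q\<in>P. card (Inn SP M M' q))"
    using card_mono[OF fU sub] cI cO by simp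
  then have "(\<Sum>q\<in>P. int (card (Outt SP M M' q))) \<le> (\<Sum>q\<in>P. int (card (Inn SP M M' q)))"
    by (metis of_nat_le_iff of_nat_sum)
  then show ?thesis by (simp add: alpha_def sum_subtractf)
qed

lemma l_sum_nonneg:
  assumes M: "spa_stable S A SP lec LP cp dl M" and M': "spa_stable S A SP lec LP cp dl M'"
    and lL: "l \<in> L"
  shows "(\<Sum>q\<in>offers P lec l. alpha SP M M' q) \<ge> 0"
proof -
  have Mm: "is_matching S A lec cp dl M" using M by (simp add: spa_stable_def)
  have M'm: "is_matching S A lec cp dl M'" using M' by (simp add: spa_stable_def)
  have Peq: "P = (\<Union>k\<in>L. offers P lec k)" using lecL by (auto simp: offers_def)
  have fo: "\<And>k. finite (offers P lec k)" using finP by (simp add: offers_def)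
  have "(\<Sum>q\<in>P. alpha SP M M' q) = (\<Sum>k\<in>L. (\<Sum>q\<in>offers P lec k. alpha SP M M' q))"
    by (subst Peq, rule sum.UNION_disjoint[OF finL]) (use fo in \<open>auto simp: offers_def\<close>)
  also have "\<dots> = (\<Sum>q\<in>offers P lec l. alpha SP M M' q) + (\<Sum>k\<in>L - {l}. (\<Sum>q\<in>offers P lec k. alpha SP M M' q))"
    using lL finL by (simp add: sum.remove)
  also have "(\<Sum>k\<in>L - {l}. (\<Sum>q\<in>offers P lec k. alpha SP M M' q)) \<le> 0"
    by (rule sum_nonpos) (use lecturer_sum[OF M M'] in auto)
  finally have "(\<Sum>q\<in>P. alpha SP M M' q) \<le> (\<Sum>q\<in>offers P lec l. alpha SP M M' q)" by simp
  then show ?thesis using global_sum[OF Mm M'm] by simp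
qed

end


theorem lemma4:
  assumes inst: "spa_instance S P L A SP lec LP cp dl"
    and stM: "spa_stable S A SP lec LP cp dl M"
    and stM': "spa_stable S A SP lec LP cp dl M'"
    and sp: "(s, p) \<in> M" and sp': "(s, p') \<in> M'"
    and diff: "p \<noteq> p'"
    and lp: "lec p = l" and lp': "lec p' = l"
    and pref: "student_prefers SP s M M'"
  shows "\<exists>z \<in> Mlec M lec l - Mlec M' lec l. (s, z) \<in> LP l"
proof (rule ccontr)
  assume H: "\<not> (\<exists>z \<in> Mlec M lec l - Mlec M' lec l. (s, z) \<in> LP l)"
  have Mm: "is_matching S A lec cp dl M" using stM by (simp add: spa_stable_def)
  have M'm: "is_matching S A lec cp dl M'" using stM' by (simp add: spa_stable_def)
  have lL: "l \<in> L" and pP: "p \<in> P" and sl: "s \<in> lec_list S A lec l"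
    using mfacts[OF inst Mm sp] lp by auto
  have ord: "strict_linear_order_on (lec_list S A lec l) (LP l)" using LPord[OF inst lL] .
  then have tr: "trans (LP l)" and ir: "irrefl (LP l)" and tot: "total_on (lec_list S A lec l) (LP l)"
    by (auto simp: strict_linear_order_on_def)
  have asym: "\<And>a b. (a, b) \<in> LP l \<Longrightarrow> (b, a) \<in> LP l \<Longrightarrow> False"
    using tr ir by (metis irrefl_def transD)
  have sM'l: "s \<in> Mlec M' lec l" using sp' lp' by (auto simp: Mlec_def)
  have Hz: "\<And>z. z \<in> Mlec M lec l \<Longrightarrow> z \<notin> Mlec M' lec l \<Longrightarrow> (z, s) \<in> LP l"
  proof -
    fix z assume z: "z \<in> Mlec M lec l" "z \<notin> Mlec M' lec l"
    have "z \<in> lec_list S A lec l" using Mlec_list[OF inst Mm] z by auto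
    moreover have "z \<noteq> s" using z sM'l by auto
    moreover have "(s, z) \<notin> LP l" using H z by auto
    ultimately show "(z, s) \<in> LP l" using tot sl by (auto simp: total_on_def)
  qed
  have C: "\<And>q x. q \<in> offers P lec l \<Longrightarrow> x \<in> Inn SP M M' q \<Longrightarrow>
      card (Mproj M' q) = cp q \<and> (\<forall>y\<in>Mproj M' q. (y, x) \<in> LP l)"
  proof -
    fix q x assume q: "q \<in> offers P lec l" and x: "x \<in> Inn SP M M' q"
    have lq: "lec q = l" using q by (simp add: offers_def)
    have xMl: "x \<in> Mlec M lec l" using x lq by (auto simp: Inn_def Mproj_def Mlec_def)
    show "card (Mproj M' q) = cp q \<and> (\<forall>y\<in>Mproj M' q. (y, x) \<in> LP l)"
    proof (rule ccontr)
      assume nA: "\<not> ?thesis"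
      then have "x \<notin> Mlec M' lec l \<and> (\<forall>y\<in>Mlec M' lec l. (y, x) \<in> LP l)"
        using notblock[OF inst Mm stM' x] lq by auto
      then show False using Hz[OF xMl] sM'l asym by blast
    qed
  qed
  have ale: "\<And>q. q \<in> offers P lec l \<Longrightarrow> alpha SP M M' q \<le> 0"
  proof -
    fix q assume q: "q \<in> offers P lec l"
    show "alpha SP M M' q \<le> 0"
    proof (cases "Inn SP M M' q = {}")
      case True then show ?thesis by (simp add: alpha_def)
    next
      case False
      then obtain x where x: "x \<in> Inn SP M M' q" by auto
      have lq: "lec q = l" using q by (simp add: offers_def)
      show ?thesis using typeA[OF inst stM M'm x] C[OF q x] lq by (simp add: alpha_def)
    qed
  qed
  have fo: "finite (offers P lec l)" using finP[OF inst] by (simp add: offers_def)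
  have az: "\<And>q. q \<in> offers P lec l \<Longrightarrow> alpha SP M M' q = 0"
  proof -
    fix q assume q: "q \<in> offers P lec l"
    have "(\<Sum>r\<in>offers P lec l. alpha SP M M' r) = alpha SP M M' q + (\<Sum>r\<in>offers P lec l - {q}. alpha SP M M' r)"
      using q fo by (simp add: sum.remove)
    moreover have "(\<Sum>r\<in>offers P lec l - {q}. alpha SP M M' r) \<le> 0"
      by (rule sum_nonpos) (use ale in auto)
    ultimately show "alpha SP M M' q = 0"
      using l_sum_nonneg[OF inst stM stM' lL] ale[OF q] by linarith
  qed
  define X where "X = (\<Union>q\<in>offers P lec l. Inn SP M M' q)"
  have finX: "finite X" unfolding X_def using fo Mproj_fin[OF inst Mm] by (auto simp: Inn_def)
  have pof: "p \<in> offers P lec l" using pP lp by (simp add: offers_def)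
  have "(s, p) \<notin> M'" using sp' diff muniq[OF inst M'm] by metis
  then have sX: "s \<in> X" unfolding X_def using pof sp pref
    by (auto simp: Inn_def Mproj_def better_def assigned_def)
  have Xsub: "X \<subseteq> lec_list S A lec l"
    unfolding X_def using Mproj_list[OF inst Mm] by (auto simp: Inn_def offers_def)
  obtain m where m: "m \<in> X" "\<forall>y\<in>X. y \<noteq> m \<longrightarrow> (y, m) \<in> LP l"
    using worst_exists[OF ord finX _ Xsub] sX by blast
  then obtain q0 where q0: "q0 \<in> offers P lec l" "m \<in> Inn SP M M' q0" unfolding X_def by auto
  have mq0: "(m, q0) \<in> M" "(m, q0) \<notin> M'" "better SP M M' m" using q0(2) by (auto simp: Inn_def Mproj_def)
  have lq0: "lec q0 = l" using q0 by (simp add: offers_def)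
  show False
  proof (cases "m \<in> Mlec M' lec l")
    case False
    have "m \<in> Mlec M lec l" using mq0 lq0 by (auto simp: Mlec_def)
    then have "(m, s) \<in> LP l" using Hz False by auto
    moreover have "s \<noteq> m" using False sM'l by auto
    then have "(s, m) \<in> LP l" using m sX by auto
    ultimately show False using asym by blast
  next
    case True
    then obtain q1 where q1: "(m, q1) \<in> M'" "lec q1 = l" by (auto simp: Mlec_def)
    have q10: "q1 \<noteq> q0" using q1 mq0 by auto
    have spm: "student_prefers SP m M M'" using mq0(3) q1 by (auto simp: better_def assigned_def)
    have "(m, q1) \<notin> M" using mq0(1) q10 muniq[OF inst Mm] by metis
    then have mO: "m \<in> Outt SP M M' q1" using q1 spm by (simp add: Outt_def Mproj_def)
    have q1o: "q1 \<in> offers P lec l" using mfacts[OF inst M'm q1(1)] q1 by (simp add: offers_def)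
    have fO: "finite (Outt SP M M' q1)" using Mproj_fin[OF inst M'm] by (auto simp: Outt_def)
    have "card (Outt SP M M' q1) > 0" using mO fO card_gt_0_iff by blast
    then have "card (Inn SP M M' q1) > 0" using az[OF q1o] by (simp add: alpha_def)
    then obtain x where x: "x \<in> Inn SP M M' q1" by (metis card.empty ex_in_conv less_irrefl)
    have "(m, x) \<in> LP l" using C[OF q1o x] q1 by (simp add: Mproj_def)
    moreover have "x \<in> X" using x q1o unfolding X_def by auto
    moreover have "x \<noteq> m" using x \<open>(m, q1) \<notin> M\<close> by (auto simp: Inn_def Mproj_def)
    ultimately show False using m asym by blast
  qed
qed

end
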